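(* Let $n\ge1$ and let $M_1,\dots,M_n$ be two-row channels each having exactly two columns. Then the greatest lower bound $\min_{1\le i\le n}M_i$ exists in $(\mathbb{C}_2,\sqsubseteq)$ (and is a two-row channel with finitely many columns).
   Context: A two-row channel with output set $\mathcal{Y}$ is a $2\times|\mathcal{Y}|$ matrix with nonnegative entries whose rows sum to $1$; $\mathbb{C}_2$ denotes the set of such channels. Refinement: $C\sqsubseteq C'$ iff there is a row-stochastic matrix $W$ with $C\cdot W=C'$. A greatest lower bound of a family $(M_i)$ is a channel $G$ with $G\sqsubseteq M_i$ for all $i$, such that $H\sqsubseteq G$ for every channel $H$ with $H\sqsubseteq M_i$ for all $i$ (unique up to mutual refinement). *)

theory Defs
  imports Main "HOL-Library.Product_Plus" Complex_Main
begin

text \<open>A two-row channel with m output columns (outputs indexed by 0..<m) is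
  a pair (m, C) with C :: bool \<Rightarrow> nat \<Rightarrow> real; the two rows are indexed by
  False/True. Only entries C r j with j < m are meaningful.\<close>

type_synonym channel2 = "nat \<times> (bool \<Rightarrow> nat \<Rightarrow> real)"

definition is_channel2 :: "channel2 \<Rightarrow> bool" where
  "is_channel2 M \<longleftrightarrow>
     (\<forall>r. \<forall>j < fst M. 0 \<le> snd M r j) \<and> (\<forall>r. (\<Sum>j < fst M. snd M r j) = 1)"

definition row_stochastic :: "nat \<Rightarrow> nat \<Rightarrow> (nat \<Rightarrow> nat \<Rightarrow> real) \<Rightarrow> bool" where
  "row_stochastic m m' W \<longleftrightarrow>
     (\<forall>j < m. (\<forall>k < m'. 0 \<le> W j k) \<and> (\<Sum>k < m'. W j k) = 1)"

definition refines :: "channel2 \<Rightarrow> channel2 \<Rightarrow> bool" where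
  "refines M M' \<longleftrightarrow>
     (\<exists>W. row_stochastic (fst M) (fst M') W \<and>
          (\<forall>r. \<forall>k < fst M'. (\<Sum>j < fst M. snd M r j * W j k) = snd M' r k))"

end

theory Submission
  imports Defs "HOL-Analysis.Analysis"
begin

hide_const (open) Disjoint_Sets.refines


definition inZ :: "nat \<Rightarrow> (bool \<Rightarrow> nat \<Rightarrow> real) \<Rightarrow> (bool \<Rightarrow> real) \<Rightarrow> bool" where
  "inZ m C X \<longleftrightarrow> (\<exists>v. (\<forall>j<m. 0 \<le> v j \<and> v j \<le> 1) \<and> (\<forall>r. (\<Sum>j<m. C r j * v j) = X r))"

definition supf :: "nat \<Rightarrow> (bool \<Rightarrow> nat \<Rightarrow> real) \<Rightarrow> real \<Rightarrow> real \<Rightarrow> real" where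
  "supf m C a b = (\<Sum>j<m. max 0 (a * C False j + b * C True j))"

lemma inZ_supf:
  assumes "inZ m C X" shows "a * X False + b * X True \<le> supf m C a b"
proof -
  obtain v where v: "\<forall>j<m. 0 \<le> v j \<and> v j \<le> 1" "\<forall>r. (\<Sum>j<m. C r j * v j) = X r"
    using assms unfolding inZ_def by blast
  have "a * X False + b * X True = (\<Sum>j<m. v j * (a * C False j + b * C True j))"
    using v(2)[rule_format, of False, symmetric] v(2)[rule_format, of True, symmetric]
    by (simp add: sum_distrib_left sum.distrib algebra_simps)
  also have "\<dots> \<le> supf m C a b" unfolding supf_def
  proof (rule sum_mono)
    fix j assume "j \<in> {..<m}"
    then have "0 \<le> v j" "v j \<le> 1" using v(1) by auto
    then show "v j * (a * C False j + b * C True j) \<le> max 0 (a * C False j + b * C True j)"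
      by (smt (verit) mult_left_le_one_le mult_nonneg_nonpos mult_nonneg_nonneg)
  qed
  finally show ?thesis .
qed

definition boxm :: "nat \<Rightarrow> (nat \<Rightarrow> real) set" where
  "boxm m = PiE UNIV (\<lambda>j. if j < m then {0..1} else {0})"

lemma mem_boxm: "v \<in> boxm m \<longleftrightarrow> (\<forall>j<m. 0 \<le> v j \<and> v j \<le> 1) \<and> (\<forall>j\<ge>m. v j = 0)"
proof -
  have "v \<in> boxm m \<longleftrightarrow> (\<forall>j. v j \<in> (if j < m then {0..1} else {0}))"
    unfolding boxm_def by (simp add: PiE_iff)
  also have "\<dots> \<longleftrightarrow> (\<forall>j<m. 0 \<le> v j \<and> v j \<le> 1) \<and> (\<forall>j\<ge>m. v j = 0)"
  proof (intro iffI conjI allI impI)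
    fix j assume a: "\<forall>j. v j \<in> (if j < m then {0..1} else {0})"
    { assume "j < m" then show "0 \<le> v j" using a[rule_format, of j] by simp }
    { assume "j < m" then show "v j \<le> 1" using a[rule_format, of j] by simp }
    { assume "m \<le> j" then show "v j = 0" using a[rule_format, of j] by simp }
  next
    fix j assume "(\<forall>j<m. 0 \<le> v j \<and> v j \<le> 1) \<and> (\<forall>j\<ge>m. v j = 0)"
    then show "v j \<in> (if j < m then {0..1} else {0})"
      by (cases "j < m") simp_all
  qed
  finally show ?thesis .
qed

lemma cont_lin: "continuous_on A (\<lambda>v::nat\<Rightarrow>real. (\<Sum>j<m. c j * v j))"
  by (intro continuous_on_sum continuous_on_mult continuous_on_const ballI)
     (rule continuous_on_subset[OF continuous_on_product_coordinates], simp)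
lemma compact_boxm: "compact (boxm m)"
proof -
  have "compactin (product_topology (\<lambda>i. euclidean) UNIV) (boxm m)"
    unfolding boxm_def by (subst compactin_PiE) simp
  then show ?thesis by (simp add: euclidean_product_topology)
qed

definition linm :: "nat \<Rightarrow> (bool \<Rightarrow> nat \<Rightarrow> real) \<Rightarrow> (nat \<Rightarrow> real) \<Rightarrow> real \<times> real" where
  "linm m C v = ((\<Sum>j<m. C False j * v j), (\<Sum>j<m. C True j * v j))"

lemma cont_linm: "continuous_on A (linm m C)"
  unfolding linm_def by (intro continuous_on_Pair cont_lin)

lemma convex_Zs: "convex (linm m C ` boxm m)"
proof (rule convexI)
  fix x y and u w :: real assume x: "x \<in> linm m C ` boxm m" and y: "y \<in> linm m C ` boxm m"
    and u: "0 \<le> u" "0 \<le> w" "u + w = 1"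
  obtain p where p: "p \<in> boxm m" "x = linm m C p" using x by blast
  obtain q where q: "q \<in> boxm m" "y = linm m C q" using y by blast
  define s where "s = (\<lambda>j. u * p j + w * q j)"
  have "s \<in> boxm m"
  proof -
    have "0 \<le> s j \<and> s j \<le> 1" if "j < m" for j
    proof -
      have "0 \<le> p j" "p j \<le> 1" "0 \<le> q j" "q j \<le> 1" using p(1) q(1) that by (auto simp: mem_boxm)
      then have "u * p j \<le> u" "w * q j \<le> w" using u by (auto intro: mult_left_le)
      then show ?thesis using u \<open>0 \<le> p j\<close> \<open>0 \<le> q j\<close> unfolding s_def by (simp add: add_nonneg_nonneg)
    qed
    moreover have "s j = 0" if "m \<le> j" for j using p(1) q(1) that by (simp add: mem_boxm s_def)
    ultimately show ?thesis by (simp add: mem_boxm)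
  qed
  moreover have "u *\<^sub>R x + w *\<^sub>R y = linm m C s"
    unfolding p q linm_def s_def by (simp add: sum_distrib_left sum.distrib algebra_simps)
  ultimately show "u *\<^sub>R x + w *\<^sub>R y \<in> linm m C ` boxm m" by blast
qed

lemma supf_inZ:
  assumes h: "\<And>a b. a * X False + b * X True \<le> supf m C a b"
  shows "inZ m C X"
proof (rule ccontr)
  assume nz: "\<not> inZ m C X"
  let ?Z = "linm m C ` boxm m"
  have "compact ?Z" by (intro compact_continuous_image cont_linm compact_boxm)
  then have cl: "closed ?Z" by (rule compact_imp_closed)
  have notin: "(X False, X True) \<notin> ?Z"
  proof
    assume "(X False, X True) \<in> ?Z"
    then obtain v where v: "v \<in> boxm m" "linm m C v = (X False, X True)" by auto
    have "\<forall>r. (\<Sum>j<m. C r j * v j) = X r"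
    proof
      fix r show "(\<Sum>j<m. C r j * v j) = X r" using v(2) by (cases r) (auto simp: linm_def)
    qed
    then have "inZ m C X" unfolding inZ_def using v(1) by (auto simp: mem_boxm)
    then show False using nz by simp
  qed
  obtain p b where pb: "inner p (X False, X True) < b" "\<forall>x\<in>?Z. inner p x > b"
    using separating_hyperplane_closed_point[OF convex_Zs cl notin] by blast
  define al where "al = - fst p"
  define be where "be = - snd p"
  define v where "v = (\<lambda>j. if j < m \<and> al * C False j + be * C True j > 0 then 1 else (0::real))"
  have vb: "v \<in> boxm m" by (simp add: mem_boxm v_def)
  have "al * fst (linm m C v) + be * snd (linm m C v) = (\<Sum>j<m. v j * (al * C False j + be * C True j))"
    by (simp add: linm_def sum_distrib_left sum.distrib algebra_simps)
  also have "\<dots> = supf m C al be" unfolding supf_def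
    by (rule sum.cong) (auto simp: v_def)
  finally have e: "al * fst (linm m C v) + be * snd (linm m C v) = supf m C al be" .
  have "inner p (linm m C v) > b" using pb(2) vb by blast
  then have "supf m C al be < al * X False + be * X True"
    using pb(1) e unfolding al_def be_def by (cases p, cases "linm m C v") (simp add: inner_real_def)
  then show False using h[of al be] by simp
qed


definition cm :: "(bool \<Rightarrow> nat \<Rightarrow> real) \<Rightarrow> nat \<Rightarrow> real" where
  "cm C j = C False j + C True j"
definition cr :: "(bool \<Rightarrow> nat \<Rightarrow> real) \<Rightarrow> nat \<Rightarrow> real" where
  "cr C j = C True j / cm C j"

definition fa :: "real \<Rightarrow> real \<Rightarrow> real \<Rightarrow> real" where
  "fa a b t = a + (b - a) * t"

lemma lin_cm: assumes "cm C j > 0"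
  shows "a * C False j + b * C True j = cm C j * fa a b (cr C j)"
proof -
  have h1: "C True j = cm C j * cr C j" using assms unfolding cr_def by simp
  have h0: "C False j = cm C j * (1 - cr C j)" using h1 unfolding cm_def by (simp add: algebra_simps)
  show ?thesis unfolding fa_def h0 h1 by (simp add: algebra_simps)
qed

lemma zero_cm: assumes "0 \<le> C False j" "0 \<le> C True j" "\<not> cm C j > 0"
  shows "C False j = 0" "C True j = 0"
  using assms unfolding cm_def by auto

lemma fa_between: assumes "rs \<le> t" "t \<le> re"
  shows "fa a b t \<le> max (fa a b rs) (fa a b re)" "min (fa a b rs) (fa a b re) \<le> fa a b t"
proof -
  have e1: "fa a b t - fa a b rs = (b - a) * (t - rs)" and e2: "fa a b re - fa a b t = (b - a) * (re - t)"
    unfolding fa_def by (simp_all add: algebra_simps)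
  show "fa a b t \<le> max (fa a b rs) (fa a b re)"
  proof (cases "b - a \<ge> 0")
    case True then have "(b - a) * (re - t) \<ge> 0" using assms by simp
    then show ?thesis using e2 by linarith
  next
    case False then have "(b - a) * (t - rs) \<le> 0" using assms by (simp add: mult_nonpos_nonneg)
    then show ?thesis using e1 by linarith
  qed
  show "min (fa a b rs) (fa a b re) \<le> fa a b t"
  proof (cases "b - a \<ge> 0")
    case True then have "(b - a) * (t - rs) \<ge> 0" using assms by simp
    then show ?thesis using e1 by linarith
  next
    case False then have "(b - a) * (re - t) \<le> 0" using assms by (simp add: mult_nonpos_nonneg)
    then show ?thesis using e2 by linarith
  qed
qed

lemma max_add_same_sign: assumes "(p::real) * q \<ge> 0" shows "max 0 (p + q) = max 0 p + max 0 q"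
proof (cases "p \<ge> 0")
  case True
  then show ?thesis using assms by (cases "q \<ge> 0") (auto simp: mult_le_0_iff zero_le_mult_iff)
next
  case False
  then show ?thesis using assms by (cases "q \<ge> 0") (auto simp: mult_le_0_iff zero_le_mult_iff)
qed

lemma supf_scaled: assumes "\<forall>j<m. 0 \<le> u j \<and> u j \<le> 1"
  shows "supf m (\<lambda>r j. C r j * (1 - u j)) a b = (\<Sum>j<m. (1 - u j) * max 0 (a * C False j + b * C True j))"
  unfolding supf_def
proof (rule sum.cong)
  fix j assume "j \<in> {..<m}"
  then have "0 \<le> 1 - u j" using assms by auto
  then have "max 0 ((1 - u j) * (a * C False j + b * C True j)) = (1 - u j) * max 0 (a * C False j + b * C True j)"
    by (simp add: max_mult_distrib_left)
  then show "max 0 (a * (C False j * (1 - u j)) + b * (C True j * (1 - u j))) = (1 - u j) * max 0 (a * C False j + b * C True j)"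
    by (simp add: algebra_simps)
qed simp

lemma shadow_rest:
  assumes nn: "\<forall>j<m. \<forall>r. 0 \<le> C r j"
    and u: "\<forall>j<m. 0 \<le> u j \<and> u j \<le> 1"
    and rsre: "rs \<le> re"
    and blk1: "\<forall>j<m. cm C j > 0 \<longrightarrow> u j > 0 \<longrightarrow> rs \<le> cr C j \<and> cr C j \<le> re"
    and blk2: "\<forall>j<m. cm C j > 0 \<longrightarrow> u j < 1 \<longrightarrow> cr C j \<le> rs \<or> re \<le> cr C j"
    and X: "inZ m C X" and Xg: "inZ m C (\<lambda>r. X r + (\<Sum>j<m. C r j * u j))"
  shows "inZ m (\<lambda>r j. C r j * (1 - u j)) X"
proof -
  let ?C' = "\<lambda>r j. C r j * (1 - u j)"
  let ?g = "\<lambda>r. (\<Sum>j<m. C r j * u j)"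
  have AB: "a * X False + b * X True \<le> supf m ?C' a b"
    if ab: "(fa a b rs \<le> 0 \<and> fa a b re \<le> 0) \<or> (fa a b rs \<ge> 0 \<and> fa a b re \<ge> 0)" for a b
  proof (cases "fa a b rs \<le> 0 \<and> fa a b re \<le> 0")
    case True
    have "supf m ?C' a b = (\<Sum>j<m. max 0 (a * C False j + b * C True j))"
      unfolding supf_scaled[OF u]
    proof (rule sum.cong)
      fix j assume j: "j \<in> {..<m}"
      have "u j * max 0 (a * C False j + b * C True j) = 0"
      proof (cases "u j = 0")
        case False
        then have up: "u j > 0" using u j by force
        show ?thesis
        proof (cases "cm C j > 0")
          case True
          then have "rs \<le> cr C j" "cr C j \<le> re" using blk1 j up by auto
          then have "fa a b (cr C j) \<le> 0" using fa_between(1)[of rs "cr C j" re a b] \<open>fa a b rs \<le> 0 \<and> fa a b re \<le> 0\<close> by linarith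
          then have "a * C False j + b * C True j \<le> 0" using lin_cm[OF True, of a b] True
            by (simp add: mult_nonneg_nonpos)
          then show ?thesis by simp
        next
          case False
          then show ?thesis using zero_cm[of C j] nn j by auto
        qed
      qed simp
      then show "(1 - u j) * max 0 (a * C False j + b * C True j) = max 0 (a * C False j + b * C True j)"
        by (simp add: algebra_simps)
    qed simp
    also have "\<dots> = supf m C a b" unfolding supf_def ..
    finally show ?thesis using inZ_supf[OF X, of a b] by simp
  next
    case False
    then have pos: "fa a b rs \<ge> 0" "fa a b re \<ge> 0" using ab by auto
    have "supf m ?C' a b = (\<Sum>j<m. max 0 (a * C False j + b * C True j) - u j * (a * C False j + b * C True j))"
      unfolding supf_scaled[OF u]
    proof (rule sum.cong)
      fix j assume j: "j \<in> {..<m}"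
      have "u j * max 0 (a * C False j + b * C True j) = u j * (a * C False j + b * C True j)"
      proof (cases "u j = 0")
        case False
        then have up: "u j > 0" using u j by force
        show ?thesis
        proof (cases "cm C j > 0")
          case True
          then have "rs \<le> cr C j" "cr C j \<le> re" using blk1 j up by auto
          then have "fa a b (cr C j) \<ge> 0" using fa_between(2)[of rs "cr C j" re a b] pos by linarith
          then have "a * C False j + b * C True j \<ge> 0" using lin_cm[OF True, of a b] True
            by simp
          then show ?thesis by simp
        next
          case False
          then show ?thesis using zero_cm[of C j] nn j by auto
        qed
      qed simp
      then show "(1 - u j) * max 0 (a * C False j + b * C True j) = max 0 (a * C False j + b * C True j) - u j * (a * C False j + b * C True j)"
        by (simp add: algebra_simps)
    qed simp
    also have "\<dots> = supf m C a b - (a * ?g False + b * ?g True)"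
      unfolding supf_def by (simp add: sum_subtractf sum_distrib_left sum.distrib algebra_simps)
    finally show ?thesis using inZ_supf[OF Xg, of a b] by (simp add: algebra_simps)
  qed
  show ?thesis
  proof (rule supf_inZ)
    fix a b
    show "a * X False + b * X True \<le> supf m ?C' a b"
    proof (cases "(fa a b rs \<le> 0 \<and> fa a b re \<le> 0) \<or> (fa a b rs \<ge> 0 \<and> fa a b re \<ge> 0)")
      case True then show ?thesis using AB by blast
    next
      case False
      define c1 where "c1 = fa a b rs"
      define c2 where "c2 = fa a b re"
      have cc: "c1 * c2 < 0" using False unfolding c1_def c2_def
        by (smt (verit) mult_pos_neg mult_neg_pos)
      have "rs \<noteq> re" using cc unfolding c1_def c2_def
        by (metis mult_less_0_iff not_square_less_zero)
      then have d: "re - rs > 0" using rsre by simp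
      define d where "d = re - rs"
      define a1 where "a1 = c1 * re / d"
      define b1 where "b1 = c1 * (re - 1) / d"
      define a2 where "a2 = c2 * (- rs) / d"
      define b2 where "b2 = c2 * (1 - rs) / d"
      have dpos: "d > 0" using d d_def by simp
      have fa1: "fa a1 b1 t = c1 * (re - t) / d" for t
        unfolding fa_def a1_def b1_def using dpos by (simp add: field_simps)
      have fa2: "fa a2 b2 t = c2 * (t - rs) / d" for t
        unfolding fa_def a2_def b2_def using dpos by (simp add: field_simps)
      have ea: "c1 * re - c2 * rs = a * d" unfolding c1_def c2_def fa_def d_def by (simp add: algebra_simps)
      have eb: "c1 * (re - 1) + c2 * (1 - rs) = b * d" unfolding c1_def c2_def fa_def d_def by (simp add: algebra_simps)
      have "a1 + a2 = (c1 * re - c2 * rs) / d" unfolding a1_def a2_def using dpos by (simp add: field_simps)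
      then have sa: "a1 + a2 = a" using ea dpos by simp
      have "b1 + b2 = (c1 * (re - 1) + c2 * (1 - rs)) / d" unfolding b1_def b2_def using dpos by (simp add: field_simps)
      then have sb: "b1 + b2 = b" using eb dpos by simp
      have "fa a1 b1 rs = c1" "fa a1 b1 re = 0" using fa1 dpos d_def by auto
      then have i1: "a1 * X False + b1 * X True \<le> supf m ?C' a1 b1" by (intro AB) auto
      have "fa a2 b2 rs = 0" "fa a2 b2 re = c2" using fa2 dpos d_def by auto
      then have i2: "a2 * X False + b2 * X True \<le> supf m ?C' a2 b2" by (intro AB) auto
      have "supf m ?C' a b = supf m ?C' a1 b1 + supf m ?C' a2 b2"
        unfolding supf_scaled[OF u] sum.distrib[symmetric]
      proof (rule sum.cong)
        fix j assume j: "j \<in> {..<m}"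
        let ?P = "a1 * C False j + b1 * C True j" and ?Q = "a2 * C False j + b2 * C True j"
        have sumPQ: "a * C False j + b * C True j = ?P + ?Q" unfolding sa[symmetric] sb[symmetric] by (simp add: algebra_simps)
        have "(1 - u j) * max 0 (?P + ?Q) = (1 - u j) * (max 0 ?P + max 0 ?Q)"
        proof (cases "u j < 1")
          case True
          show ?thesis
          proof (cases "cm C j > 0")
            case cpos: True
            let ?t = "cr C j"
            have out: "?t \<le> rs \<or> re \<le> ?t" using blk2 j True cpos by auto
            have "(re - ?t) * (?t - rs) \<le> 0"
            proof (cases "?t \<le> rs")
              case True then show ?thesis using rsre by (intro mult_nonneg_nonpos) auto
            next
              case False then show ?thesis using out by (intro mult_nonpos_nonneg) auto
            qed
            then have "(c1 * c2) * ((re - ?t) * (?t - rs)) \<ge> 0" using cc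
              by (simp add: mult_nonpos_nonpos)
            then have "(c1 * (re - ?t) / d) * (c2 * (?t - rs) / d) \<ge> 0" using dpos
              by (simp add: field_simps)
            then have "(cm C j * fa a1 b1 ?t) * (cm C j * fa a2 b2 ?t) \<ge> 0"
              unfolding fa1 fa2 using cpos
              by (metis (no_types, opaque_lifting) mult.commute mult.left_commute zero_le_mult_iff zero_le_square)
            then have "?P * ?Q \<ge> 0" using lin_cm[OF cpos] by metis
            then show ?thesis by (simp add: max_add_same_sign)
          next
            case False
            then show ?thesis using zero_cm[of C j] nn j by auto
          qed
        next
          case False then have "u j = 1" using u j by force
          then show ?thesis by simp
        qed
        then show "(1 - u j) * max 0 (a * C False j + b * C True j) =
          (1 - u j) * max 0 ?P + (1 - u j) * max 0 ?Q" using sumPQ by (simp add: algebra_simps)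
      qed simp
      moreover have "a * X False + b * X True = (a1 * X False + b1 * X True) + (a2 * X False + b2 * X True)"
        unfolding sa[symmetric] sb[symmetric] by (simp add: algebra_simps)
      ultimately show ?thesis using i1 i2 by linarith
    qed
  qed
qed



definition qf :: "(bool \<Rightarrow> nat \<Rightarrow> real) \<Rightarrow> nat \<Rightarrow> real" where
  "qf C l = (C True l)^2 / cm C l"

lemma cm_parts: assumes "cm C j > 0"
  shows "C True j = cm C j * cr C j" "C False j = cm C j * (1 - cr C j)" "qf C j = cm C j * (cr C j)^2"
proof -
  show h1: "C True j = cm C j * cr C j" using assms unfolding cr_def by simp
  show "C False j = cm C j * (1 - cr C j)" using h1 unfolding cm_def by (simp add: algebra_simps)
  show "qf C j = cm C j * (cr C j)^2" unfolding qf_def h1 using assms by (simp add: power2_eq_square)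
qed

lemma sum_if_at: "i < (m::nat) \<Longrightarrow> (\<Sum>l<m. c l * (if l = i then a else 0)) = c i * (a::real)"
proof -
  assume i: "i < m"
  have "(\<Sum>l<m. c l * (if l = i then a else 0)) = (\<Sum>l<m. if l = i then c i * a else 0)"
    by (rule sum.cong) auto
  also have "\<dots> = c i * a" using sum.delta[of "{..<m}" i "\<lambda>_. c i * a"] i by simp
  finally show ?thesis .
qed

lemma sum_upd3:
  assumes "i < (m::nat)" "j < m" "k < m"
  shows "(\<Sum>l<m. c l * (u l + ((if l = i then di else 0) + (if l = k then dk else 0) + (if l = j then dj else 0))))
     = (\<Sum>l<m. c l * u l) + c i * di + c k * dk + c j * (dj::real)"
  using assms by (simp add: distrib_left sum.distrib sum_if_at)

lemma exchange:
  assumes box: "u \<in> boxm m" and ijk: "i < m" "j < m" "k < m"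
   and pos: "cm C i > 0" "cm C j > 0" "cm C k > 0"
   and ord: "cr C i < cr C j" "cr C j < cr C k"
   and uu: "u i > 0" "u k > 0" "u j < 1"
  shows "\<exists>u'. u' \<in> boxm m \<and> linm m C u' = linm m C u \<and> (\<Sum>l<m. qf C l * u' l) < (\<Sum>l<m. qf C l * u l)"
proof -
  define ri where "ri = cr C i"
  define rj where "rj = cr C j"
  define rk where "rk = cr C k"
  define mi where "mi = cm C i"
  define mj where "mj = cm C j"
  define mk where "mk = cm C k"
  have o1: "ri < rj" and o2: "rj < rk" using ord unfolding ri_def rj_def rk_def by auto
  have mpos: "mi > 0" "mj > 0" "mk > 0" using pos unfolding mi_def mj_def mk_def by auto
  define D where "D = rk - ri"
  have Dpos: "D > 0" using o1 o2 unfolding D_def by simp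
  define z1 where "z1 = u i * mi * D / (rk - rj)"
  define z2 where "z2 = u k * mk * D / (rj - ri)"
  define z3 where "z3 = (1 - u j) * mj"
  define z where "z = min (min z1 z2) z3"
  have "z1 > 0" unfolding z1_def using uu mpos Dpos o2 by simp
  moreover have "z2 > 0" unfolding z2_def using uu mpos Dpos o1 by simp
  moreover have "z3 > 0" unfolding z3_def using uu mpos by simp
  ultimately have zpos: "z > 0" unfolding z_def by simp
  have zb: "z \<le> z1" "z \<le> z2" "z \<le> z3" unfolding z_def by auto
  define x where "x = z * (rk - rj) / D"
  define y where "y = z * (rj - ri) / D"
  have xpos: "x > 0" unfolding x_def using zpos o2 Dpos by simp
  have ypos: "y > 0" unfolding y_def using zpos o1 Dpos by simp
  have xb: "x \<le> u i * mi"
  proof -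
    have "z * (rk - rj) \<le> z1 * (rk - rj)" using zb o2 by (simp add: mult_right_mono)
    also have "\<dots> = u i * mi * D" unfolding z1_def using o2 by simp
    finally show ?thesis unfolding x_def using Dpos by (simp add: divide_le_eq mult.commute)
  qed
  have yb: "y \<le> u k * mk"
  proof -
    have "z * (rj - ri) \<le> z2 * (rj - ri)" using zb o1 by (simp add: mult_right_mono)
    also have "\<dots> = u k * mk * D" unfolding z2_def using o1 by simp
    finally show ?thesis unfolding y_def using Dpos by (simp add: divide_le_eq mult.commute)
  qed
  have zb3: "z \<le> (1 - u j) * mj" using zb unfolding z3_def by simp
  have xD: "x * D = z * (rk - rj)" unfolding x_def using Dpos by simp
  have yD: "y * D = z * (rj - ri)" unfolding y_def using Dpos by simp
  have "(x + y) * D = z * D" unfolding distrib_right xD yD unfolding D_def by (simp add: algebra_simps)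
  then have xyz: "x + y = z" using Dpos by simp
  have "(x * ri + y * rk) * D = ri * (x * D) + rk * (y * D)" by (simp add: algebra_simps)
  also have "\<dots> = ri * (z * (rk - rj)) + rk * (z * (rj - ri))" unfolding xD yD ..
  also have "\<dots> = (z * rj) * D" unfolding D_def by (simp add: algebra_simps)
  finally have "(x * ri + y * rk) * D = (z * rj) * D" .
  then have xyzr: "x * ri + y * rk = z * rj" using Dpos by simp
  have "(x * ri^2 + y * rk^2 - z * rj^2) * D = (z * (rk - rj) * (rj - ri)) * D"
  proof -
    have "(x * ri^2 + y * rk^2 - z * rj^2) * D = (x * D) * ri^2 + (y * D) * rk^2 - z * rj^2 * D"
      by (simp add: algebra_simps)
    also have "\<dots> = z * (rk - rj) * ri^2 + z * (rj - ri) * rk^2 - z * rj^2 * D" unfolding xD yD ..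
    also have "\<dots> = (z * (rk - rj) * (rj - ri)) * D" unfolding D_def by (simp add: algebra_simps power2_eq_square)
    finally show ?thesis .
  qed
  then have obj: "x * ri^2 + y * rk^2 - z * rj^2 = z * (rk - rj) * (rj - ri)" using Dpos by simp
  have ij: "i \<noteq> j" and jk: "j \<noteq> k" and ik: "i \<noteq> k" using o1 o2 unfolding ri_def rj_def rk_def by auto
  define di where "di = - x / mi"
  define dk where "dk = - y / mk"
  define dj where "dj = z / mj"
  define u' where "u' = (\<lambda>l. u l + ((if l = i then di else 0) + (if l = k then dk else 0) + (if l = j then dj else 0)))"
  have ub: "\<forall>l<m. 0 \<le> u l \<and> u l \<le> 1" "\<forall>l\<ge>m. u l = 0" using box by (auto simp: mem_boxm)
  have "u' \<in> boxm m"
  proof -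
    have "0 \<le> u' l \<and> u' l \<le> 1" if l: "l < m" for l
    proof -
      consider "l = i" | "l = k" | "l = j" | "l \<noteq> i \<and> l \<noteq> j \<and> l \<noteq> k" by blast
      then show ?thesis
      proof cases
        case 1
        have "x / mi \<le> u i" using xb mpos by (simp add: divide_le_eq mult.commute)
        moreover have "x / mi \<ge> 0" using xpos mpos by simp
        ultimately show ?thesis using 1 ij ik ub l unfolding u'_def di_def by auto
      next
        case 2
        have "y / mk \<le> u k" using yb mpos by (simp add: divide_le_eq mult.commute)
        moreover have "y / mk \<ge> 0" using ypos mpos by simp
        ultimately show ?thesis using 2 jk ik ub l unfolding u'_def dk_def by auto
      next
        case 3
        have "z / mj \<le> 1 - u j" using zb3 mpos by (simp add: divide_le_eq mult.commute)
        moreover have "z / mj \<ge> 0" using zpos mpos by simp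
        ultimately show ?thesis using 3 ij jk ub l unfolding u'_def dj_def by auto
      next
        case 4 then show ?thesis using ub l unfolding u'_def by auto
      qed
    qed
    moreover have "u' l = 0" if "m \<le> l" for l using that ijk ub unfolding u'_def by auto
    ultimately show ?thesis by (simp add: mem_boxm)
  qed
  moreover have "linm m C u' = linm m C u"
  proof -
    have "C True i * di + C True k * dk + C True j * dj = 0"
      unfolding di_def dk_def dj_def cm_parts(1)[OF pos(1)] cm_parts(1)[OF pos(2)] cm_parts(1)[OF pos(3)]
      using mpos xyzr unfolding mi_def mj_def mk_def ri_def rj_def rk_def by (simp add: algebra_simps)
    moreover have "C False i * di + C False k * dk + C False j * dj = 0"
      unfolding di_def dk_def dj_def cm_parts(2)[OF pos(1)] cm_parts(2)[OF pos(2)] cm_parts(2)[OF pos(3)]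
      using mpos xyzr xyz unfolding mi_def mj_def mk_def ri_def rj_def rk_def by (simp add: algebra_simps)
    ultimately show ?thesis unfolding linm_def u'_def using sum_upd3[OF ijk] by simp
  qed
  moreover have "(\<Sum>l<m. qf C l * u' l) < (\<Sum>l<m. qf C l * u l)"
  proof -
    have "qf C i * di + qf C k * dk + qf C j * dj = - (x * ri^2 + y * rk^2 - z * rj^2)"
      unfolding di_def dk_def dj_def cm_parts(3)[OF pos(1)] cm_parts(3)[OF pos(2)] cm_parts(3)[OF pos(3)]
      using mpos unfolding mi_def mj_def mk_def ri_def rj_def rk_def by (simp add: algebra_simps)
    also have "\<dots> < 0" unfolding obj using zpos o1 o2 by simp
    finally show ?thesis unfolding u'_def using sum_upd3[OF ijk, of "qf C" u di dk dj] by simp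
  qed
  ultimately show ?thesis by blast
qed

lemma shadow_exists:
  assumes nn: "\<forall>j<m. \<forall>r. 0 \<le> C r j" and g: "inZ m C g"
  shows "\<exists>u rs re. (\<forall>j<m. 0 \<le> u j \<and> u j \<le> 1) \<and> (\<forall>r. (\<Sum>j<m. C r j * u j) = g r) \<and> rs \<le> re \<and>
     (\<forall>j<m. cm C j > 0 \<longrightarrow> u j > 0 \<longrightarrow> rs \<le> cr C j \<and> cr C j \<le> re) \<and>
     (\<forall>j<m. cm C j > 0 \<longrightarrow> u j < 1 \<longrightarrow> cr C j \<le> rs \<or> re \<le> cr C j)"
proof -
  define R where "R = boxm m \<inter> {u. linm m C u = (g False, g True)}"
  have cR: "compact R" unfolding R_def
    by (intro compact_Int_closed compact_boxm closed_Collect_eq cont_linm continuous_on_const)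
  obtain v where v: "\<forall>j<m. 0 \<le> v j \<and> v j \<le> 1" "\<forall>r. (\<Sum>j<m. C r j * v j) = g r"
    using g unfolding inZ_def by blast
  define v0 where "v0 = (\<lambda>j. if j < m then v j else 0)"
  have "v0 \<in> boxm m" using v(1) by (simp add: mem_boxm v0_def)
  moreover have "linm m C v0 = (g False, g True)"
    using v(2)[rule_format, of False] v(2)[rule_format, of True] unfolding linm_def v0_def by simp
  ultimately have "v0 \<in> R" unfolding R_def by simp
  then have Rne: "R \<noteq> {}" by auto
  define F where "F = (\<lambda>w::nat\<Rightarrow>real. \<Sum>l<m. qf C l * w l)"
  have "continuous_on R F" unfolding F_def by (rule cont_lin)
  then obtain u where u: "u \<in> R" "\<forall>w\<in>R. F u \<le> F w"
    using continuous_attains_inf[OF cR Rne] by blast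
  have ub: "u \<in> boxm m" "linm m C u = (g False, g True)" using u(1) unfolding R_def by auto
  have u01: "\<forall>j<m. 0 \<le> u j \<and> u j \<le> 1" using ub(1) by (simp add: mem_boxm)
  have ug: "\<forall>r. (\<Sum>j<m. C r j * u j) = g r"
  proof
    fix r show "(\<Sum>j<m. C r j * u j) = g r" using ub(2) by (cases r) (auto simp: linm_def)
  qed
  define J where "J = {j. j < m \<and> cm C j > 0 \<and> u j > 0}"
  have fJ: "finite J" unfolding J_def by simp
  show ?thesis
  proof (cases "J = {}")
    case True
    have "\<forall>j<m. cm C j > 0 \<longrightarrow> u j > 0 \<longrightarrow> (0::real) \<le> cr C j \<and> cr C j \<le> 0"
      using True unfolding J_def by auto
    moreover have "\<forall>j<m. cm C j > 0 \<longrightarrow> u j < 1 \<longrightarrow> cr C j \<le> 0 \<or> 0 \<le> cr C j" by auto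
    ultimately show ?thesis using u01 ug by (intro exI[of _ u] exI[of _ 0]) auto
  next
    case False
    define rs where "rs = Min (cr C ` J)"
    define re where "re = Max (cr C ` J)"
    obtain j0 where j0: "j0 \<in> J" using False by blast
    have "rs \<le> cr C j0" unfolding rs_def using fJ j0 by simp
    moreover have "cr C j0 \<le> re" unfolding re_def using fJ j0 by simp
    ultimately have "rs \<le> re" by simp
    moreover have b1: "\<forall>j<m. cm C j > 0 \<longrightarrow> u j > 0 \<longrightarrow> rs \<le> cr C j \<and> cr C j \<le> re"
      unfolding rs_def re_def using fJ by (auto simp: J_def)
    moreover have "\<forall>j<m. cm C j > 0 \<longrightarrow> u j < 1 \<longrightarrow> cr C j \<le> rs \<or> re \<le> cr C j"
    proof (intro allI impI, rule ccontr)
      fix j assume j: "j < m" "cm C j > 0" "u j < 1" and nj: "\<not> (cr C j \<le> rs \<or> re \<le> cr C j)"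
      have "rs \<in> cr C ` J" unfolding rs_def using fJ False by simp
      then obtain i where i: "i \<in> J" "cr C i = rs" by auto
      have "re \<in> cr C ` J" unfolding re_def using fJ False by simp
      then obtain k where k: "k \<in> J" "cr C k = re" by auto
      obtain u' where u': "u' \<in> boxm m" "linm m C u' = linm m C u" "F u' < F u"
        using exchange[OF ub(1), of i j k C] i k j nj unfolding J_def F_def by auto
      have "u' \<in> R" using u' ub unfolding R_def by simp
      then show False using u(2) u'(3) by force
    qed
    ultimately show ?thesis using u01 ug by blast
  qed
qed



lemma blackwell:
  fixes k m :: nat and G :: "bool \<Rightarrow> nat \<Rightarrow> real"
  assumes k: "1 \<le> k"
  shows "\<And>C. (\<forall>j<m. \<forall>r. 0 \<le> C r j) \<Longrightarrow> (\<forall>r. (\<Sum>j<m. C r j) = (\<Sum>l<k. G r l)) \<Longrightarrow>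
     (\<forall>v. (\<forall>l<k. 0 \<le> v l \<and> v l \<le> 1) \<longrightarrow> inZ m C (\<lambda>r. \<Sum>l<k. G r l * v l)) \<Longrightarrow>
     \<exists>W. (\<forall>j<m. (\<forall>l<k. 0 \<le> W j l) \<and> (\<Sum>l<k. W j l) = 1) \<and> (\<forall>r. \<forall>l<k. (\<Sum>j<m. C r j * W j l) = G r l)"
  using k
proof (induction k rule: nat_induct_at_least)
  case base
  fix C :: "bool \<Rightarrow> nat \<Rightarrow> real"
  assume tot: "\<forall>r. (\<Sum>j<m. C r j) = (\<Sum>l<1. G r l)"
  show "\<exists>W. (\<forall>j<m. (\<forall>l<1. 0 \<le> W j l) \<and> (\<Sum>l<1. W j l) = 1) \<and> (\<forall>r. \<forall>l<1. (\<Sum>j<m. C r j * W j l) = G r l)"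
    using tot by (intro exI[of _ "\<lambda>j l. 1"]) auto
next
  case (Suc k)
  fix C :: "bool \<Rightarrow> nat \<Rightarrow> real"
  assume nn: "\<forall>j<m. \<forall>r. 0 \<le> C r j"
    and tot: "\<forall>r. (\<Sum>j<m. C r j) = (\<Sum>l<Suc k. G r l)"
    and hz: "\<forall>v. (\<forall>l<Suc k. 0 \<le> v l \<and> v l \<le> 1) \<longrightarrow> inZ m C (\<lambda>r. \<Sum>l<Suc k. G r l * v l)"
  have "inZ m C (\<lambda>r. \<Sum>l<Suc k. G r l * (if l = k then 1 else 0))"
    by (rule hz[rule_format]) simp
  moreover have "(\<lambda>r. \<Sum>l<Suc k. G r l * (if l = k then 1 else 0)) = (\<lambda>r. G r k)"
    by (rule ext) (simp add: sum_if_at)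
  ultimately have gz: "inZ m C (\<lambda>r. G r k)" by simp
  obtain u rs re where u: "\<forall>j<m. 0 \<le> u j \<and> u j \<le> 1" "\<forall>r. (\<Sum>j<m. C r j * u j) = G r k" "rs \<le> re"
     "\<forall>j<m. cm C j > 0 \<longrightarrow> u j > 0 \<longrightarrow> rs \<le> cr C j \<and> cr C j \<le> re"
     "\<forall>j<m. cm C j > 0 \<longrightarrow> u j < 1 \<longrightarrow> cr C j \<le> rs \<or> re \<le> cr C j"
    using shadow_exists[OF nn gz] by blast
  define C' where "C' = (\<lambda>r j. C r j * (1 - u j))"
  have nn': "\<forall>j<m. \<forall>r. 0 \<le> C' r j" unfolding C'_def using nn u(1) by simp
  have tot': "\<forall>r. (\<Sum>j<m. C' r j) = (\<Sum>l<k. G r l)"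
  proof
    fix r
    have "(\<Sum>j<m. C' r j) = (\<Sum>j<m. C r j) - (\<Sum>j<m. C r j * u j)"
      unfolding C'_def by (simp add: algebra_simps sum_subtractf)
    then show "(\<Sum>j<m. C' r j) = (\<Sum>l<k. G r l)" using tot u(2) by simp
  qed
  have hz': "\<forall>v. (\<forall>l<k. 0 \<le> v l \<and> v l \<le> 1) \<longrightarrow> inZ m C' (\<lambda>r. \<Sum>l<k. G r l * v l)"
  proof (intro allI impI)
    fix v :: "nat \<Rightarrow> real" assume v: "\<forall>l<k. 0 \<le> v l \<and> v l \<le> 1"
    let ?X = "\<lambda>r. \<Sum>l<k. G r l * v l"
    have vv: "\<forall>l<Suc k. 0 \<le> (v(k := c)) l \<and> (v(k := c)) l \<le> 1" if c: "0 \<le> c" "c \<le> 1" for c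
    proof (intro allI impI)
      fix l assume l: "l < Suc k"
      show "0 \<le> (v(k := c)) l \<and> (v(k := c)) l \<le> 1"
      proof (cases "l = k")
        case True then show ?thesis using c by simp
      next
        case False then have "l < k" using l by simp
        then show ?thesis using v False by simp
      qed
    qed
    have v0: "\<forall>l<Suc k. 0 \<le> (v(k := 0)) l \<and> (v(k := 0)) l \<le> 1" by (rule vv) simp_all
    have vsum: "(\<Sum>l<Suc k. G r l * (v(k := c)) l) = (\<Sum>l<k. G r l * v l) + G r k * c" for r c
    proof -
      have "(\<Sum>l<k. G r l * (v(k := c)) l) = (\<Sum>l<k. G r l * v l)" by (rule sum.cong) auto
      then show ?thesis by simp
    qed
    have "inZ m C (\<lambda>r. \<Sum>l<Suc k. G r l * (v(k := 0)) l)" by (rule mp[OF spec[OF hz] v0])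
    moreover have "(\<lambda>r. \<Sum>l<Suc k. G r l * (v(k := 0)) l) = ?X"
      using vsum[of _ 0] by simp
    ultimately have X: "inZ m C ?X" by simp
    have v1: "\<forall>l<Suc k. 0 \<le> (v(k := 1)) l \<and> (v(k := 1)) l \<le> 1" by (rule vv) simp_all
    have "inZ m C (\<lambda>r. \<Sum>l<Suc k. G r l * (v(k := 1)) l)" by (rule mp[OF spec[OF hz] v1])
    moreover have "(\<lambda>r. \<Sum>l<Suc k. G r l * (v(k := 1)) l) = (\<lambda>r. ?X r + (\<Sum>j<m. C r j * u j))"
      using vsum[of _ 1] u(2) by simp
    ultimately have Xg: "inZ m C (\<lambda>r. ?X r + (\<Sum>j<m. C r j * u j))" by simp
    show "inZ m C' ?X" unfolding C'_def using shadow_rest[OF nn u(1) u(3) u(4) u(5) X Xg] .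
  qed
  obtain W' where W': "\<forall>j<m. (\<forall>l<k. 0 \<le> W' j l) \<and> (\<Sum>l<k. W' j l) = 1"
    "\<forall>r. \<forall>l<k. (\<Sum>j<m. C' r j * W' j l) = G r l"
    using Suc.IH[OF nn' tot' hz'] by blast
  define W where "W = (\<lambda>j l. if l = k then u j else (1 - u j) * W' j l)"
  have f1: "\<forall>j<m. (\<forall>l<Suc k. 0 \<le> W j l) \<and> (\<Sum>l<Suc k. W j l) = 1"
  proof (intro allI impI)
    fix j assume j: "j < m"
    have a: "\<forall>l<Suc k. 0 \<le> W j l"
    proof (intro allI impI)
      fix l assume l: "l < Suc k"
      show "0 \<le> W j l"
      proof (cases "l = k")
        case True then show ?thesis using j u(1) by (simp add: W_def)
      next
        case False then have "l < k" using l by simp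
        then show ?thesis using j u(1) W'(1) False by (simp add: W_def)
      qed
    qed
    have s1: "(\<Sum>l<Suc k. W j l) = (\<Sum>l<k. W j l) + W j k" by simp
    have s2: "(\<Sum>l<k. W j l) = (\<Sum>l<k. (1 - u j) * W' j l)" by (rule sum.cong) (auto simp: W_def)
    have s3: "(\<Sum>l<k. (1 - u j) * W' j l) = (1 - u j) * (\<Sum>l<k. W' j l)" by (rule sum_distrib_left[symmetric])
    have s4: "W j k = u j" by (simp add: W_def)
    have "(\<Sum>l<Suc k. W j l) = (1 - u j) * (\<Sum>l<k. W' j l) + u j" unfolding s1 s2 s3 s4 ..
    also have "\<dots> = 1" using W'(1) j by simp
    finally show "(\<forall>l<Suc k. 0 \<le> W j l) \<and> (\<Sum>l<Suc k. W j l) = 1" using a by simp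
  qed
  have f2: "\<forall>r. \<forall>l<Suc k. (\<Sum>j<m. C r j * W j l) = G r l"
  proof (intro allI impI)
    fix r l assume l: "l < Suc k"
    show "(\<Sum>j<m. C r j * W j l) = G r l"
    proof (cases "l = k")
      case True then show ?thesis using u(2) by (simp add: W_def)
    next
      case False
      then have lk: "l < k" using l by simp
      have "(\<Sum>j<m. C r j * W j l) = (\<Sum>j<m. C' r j * W' j l)"
        unfolding W_def C'_def using False by (simp add: algebra_simps)
      then show ?thesis using W'(2) lk by simp
    qed
  qed
  show "\<exists>W. (\<forall>j<m. (\<forall>l<Suc k. 0 \<le> W j l) \<and> (\<Sum>l<Suc k. W j l) = 1) \<and>
      (\<forall>r. \<forall>l<Suc k. (\<Sum>j<m. C r j * W j l) = G r l)" by (intro exI[of _ W] conjI f1 f2)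
qed



definition pt :: "real \<Rightarrow> real \<Rightarrow> bool \<Rightarrow> real" where
  "pt x y = (\<lambda>r. if r then y else x)"

lemma inZ_conv:
  assumes X: "inZ m C X" and Y: "inZ m C Y" and t: "0 \<le> t" "t \<le> 1"
  shows "inZ m C (\<lambda>r. t * X r + (1 - t) * Y r)"
proof -
  obtain p where p: "\<forall>j<m. 0 \<le> p j \<and> p j \<le> 1" "\<forall>r. (\<Sum>j<m. C r j * p j) = X r"
    using X unfolding inZ_def by blast
  obtain q where q: "\<forall>j<m. 0 \<le> q j \<and> q j \<le> 1" "\<forall>r. (\<Sum>j<m. C r j * q j) = Y r"
    using Y unfolding inZ_def by blast
  define w where "w = (\<lambda>j. t * p j + (1 - t) * q j)"
  have "\<forall>j<m. 0 \<le> w j \<and> w j \<le> 1"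
  proof (intro allI impI)
    fix j assume j: "j < m"
    have pj: "0 \<le> p j" "p j \<le> 1" using p(1) j by auto
    have qj: "0 \<le> q j" "q j \<le> 1" using q(1) j by auto
    have "t * p j \<le> t" using pj t by (simp add: mult_left_le)
    moreover have "(1 - t) * q j \<le> 1 - t" using qj t by (simp add: mult_left_le)
    moreover have "0 \<le> t * p j" "0 \<le> (1 - t) * q j" using pj qj t by auto
    ultimately show "0 \<le> w j \<and> w j \<le> 1" unfolding w_def by linarith
  qed
  moreover have "\<forall>r. (\<Sum>j<m. C r j * w j) = t * X r + (1 - t) * Y r"
  proof
    fix r
    have "(\<Sum>j<m. C r j * w j) = (\<Sum>j<m. t * (C r j * p j) + (1 - t) * (C r j * q j))"
      unfolding w_def by (rule sum.cong) (simp_all add: algebra_simps)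
    also have "\<dots> = t * (\<Sum>j<m. C r j * p j) + (1 - t) * (\<Sum>j<m. C r j * q j)"
      by (simp add: sum.distrib sum_distrib_left)
    finally have "(\<Sum>j<m. C r j * w j) = t * (\<Sum>j<m. C r j * p j) + (1 - t) * (\<Sum>j<m. C r j * q j)" .
    then show "(\<Sum>j<m. C r j * w j) = t * X r + (1 - t) * Y r" using p(2) q(2) by simp
  qed
  ultimately show ?thesis unfolding inZ_def by blast
qed

lemma inZ_compl:
  assumes X: "inZ m C X"
  shows "inZ m C (\<lambda>r. (\<Sum>j<m. C r j) - X r)"
proof -
  obtain p where p: "\<forall>j<m. 0 \<le> p j \<and> p j \<le> 1" "\<forall>r. (\<Sum>j<m. C r j * p j) = X r"
    using X unfolding inZ_def by blast
  define w where "w = (\<lambda>j. 1 - p j)"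
  have "\<forall>j<m. 0 \<le> w j \<and> w j \<le> 1" using p(1) by (auto simp: w_def)
  moreover have "\<forall>r. (\<Sum>j<m. C r j * w j) = (\<Sum>j<m. C r j) - X r" unfolding w_def
  proof
    fix r
    have "(\<Sum>j<m. C r j * (1 - p j)) = (\<Sum>j<m. C r j - C r j * p j)"
      by (rule sum.cong) (simp_all add: algebra_simps)
    also have "\<dots> = (\<Sum>j<m. C r j) - (\<Sum>j<m. C r j * p j)" by (rule sum_subtractf)
    finally show "(\<Sum>j<m. C r j * (1 - p j)) = (\<Sum>j<m. C r j) - X r" using p(2) by simp
  qed
  ultimately show ?thesis unfolding inZ_def by blast
qed

lemma inZ_total: "inZ m C (\<lambda>r. (\<Sum>j<m. C r j))"
  unfolding inZ_def by (intro exI[of _ "\<lambda>j. 1"]) simp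

lemma inZ_zero: "inZ m C (\<lambda>r. 0)"
  unfolding inZ_def by (intro exI[of _ "\<lambda>j. 0"]) simp

definition Zp :: "nat \<Rightarrow> (bool \<Rightarrow> nat \<Rightarrow> real) \<Rightarrow> (real \<times> real) set" where
  "Zp m C = {p. inZ m C (pt (fst p) (snd p))}"

lemma convex_Zp: "convex (Zp m C)"
proof (rule convexI)
  fix x y :: "real \<times> real" and u w :: real
  assume x: "x \<in> Zp m C" and y: "y \<in> Zp m C" and u: "0 \<le> u" "0 \<le> w" "u + w = 1"
  have "inZ m C (\<lambda>r. u * pt (fst x) (snd x) r + (1 - u) * pt (fst y) (snd y) r)"
    using inZ_conv[of m C _ _ u] x y u unfolding Zp_def by simp
  moreover have "(\<lambda>r. u * pt (fst x) (snd x) r + (1 - u) * pt (fst y) (snd y) r)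
      = pt (fst (u *\<^sub>R x + w *\<^sub>R y)) (snd (u *\<^sub>R x + w *\<^sub>R y))"
    using u by (auto simp: pt_def)
  ultimately show "u *\<^sub>R x + w *\<^sub>R y \<in> Zp m C" unfolding Zp_def by simp
qed

lemma sum_split_at:
  fixes f :: "nat \<Rightarrow> real"
  assumes "s \<le> K"
  shows "(\<Sum>l<K. f l) = (\<Sum>l<s. f l) + (\<Sum>l\<in>{s..<K}. f l)"
proof -
  have "{..<K} = {..<s} \<union> {s..<K}" using assms by auto
  then show ?thesis by (metis sum.union_disjoint finite_lessThan finite_atLeastLessThan ivl_disj_int_one(2))
qed

lemma sum_prefix_ind:
  fixes f :: "nat \<Rightarrow> real"
  assumes "s \<le> K"
  shows "(\<Sum>l<K. f l * (if l < s then 1 else 0)) = (\<Sum>l<s. f l)"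
proof -
  have "(\<Sum>l<K. f l * (if l < s then 1 else 0)) = (\<Sum>l<s. f l * (if l < s then 1 else 0)) + (\<Sum>l\<in>{s..<K}. f l * (if l < s then 1 else 0))"
    by (rule sum_split_at[OF assms])
  also have "\<dots> = (\<Sum>l<s. f l)" by simp
  finally show ?thesis .
qed

lemma sum_suffix_ind:
  fixes f :: "nat \<Rightarrow> real"
  assumes "s \<le> K"
  shows "(\<Sum>l<K. f l * (if s \<le> l then 1 else 0)) = (\<Sum>l<K. f l) - (\<Sum>l<s. f l)"
proof -
  have "(\<Sum>l<K. f l * (if s \<le> l then 1 else 0)) = (\<Sum>l<s. f l * (if s \<le> l then 1 else 0)) + (\<Sum>l\<in>{s..<K}. f l * (if s \<le> l then 1 else 0))"
    by (rule sum_split_at[OF assms])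
  also have "\<dots> = (\<Sum>l\<in>{s..<K}. f l)" by simp
  also have "\<dots> = (\<Sum>l<K. f l) - (\<Sum>l<s. f l)" using sum_split_at[OF assms, of f] by simp
  finally show ?thesis .
qed

lemma sign_split:
  fixes f :: "nat \<Rightarrow> real"
  assumes up: "\<forall>l l'. l < l' \<longrightarrow> l' < K \<longrightarrow> f l > 0 \<longrightarrow> f l' \<ge> 0"
  shows "\<exists>s\<le>K. (\<forall>l<s. f l \<le> 0) \<and> (\<forall>l. s \<le> l \<and> l < K \<longrightarrow> f l \<ge> 0)"
proof (cases "\<exists>l<K. f l > 0")
  case True
  define s where "s = (LEAST l. l < K \<and> f l > 0)"
  have s: "s < K \<and> f s > 0" unfolding s_def using True by (metis (mono_tags, lifting) LeastI)
  have "\<forall>l<s. f l \<le> 0"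
  proof (intro allI impI)
    fix l assume "l < s"
    then have "\<not> (l < K \<and> f l > 0)" unfolding s_def using not_less_Least by blast
    then show "f l \<le> 0" using \<open>l < s\<close> s by auto
  qed
  moreover have "\<forall>l. s \<le> l \<and> l < K \<longrightarrow> f l \<ge> 0"
  proof (intro allI impI)
    fix l assume l: "s \<le> l \<and> l < K"
    show "f l \<ge> 0"
    proof (cases "l = s")
      case True then show ?thesis using s by simp
    next
      case False then have "s < l" using l by simp
      then show ?thesis using up[rule_format, of s l] s l by auto
    qed
  qed
  ultimately show ?thesis using s by (intro exI[of _ s]) auto
next
  case False
  then show ?thesis by (intro exI[of _ K]) auto
qed

lemma sum_pos_part_suffix:
  fixes f :: "nat \<Rightarrow> real"
  assumes "s \<le> K" "\<forall>l<s. f l \<le> 0" "\<forall>l. s \<le> l \<and> l < K \<longrightarrow> f l \<ge> 0"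
  shows "(\<Sum>l<K. max 0 (f l)) = (\<Sum>l<K. f l) - (\<Sum>l<s. f l)"
proof -
  have "(\<Sum>l<K. max 0 (f l)) = (\<Sum>l<K. f l * (if s \<le> l then 1 else 0))"
    by (rule sum.cong) (use assms in auto)
  then show ?thesis using sum_suffix_ind[OF assms(1)] by simp
qed

lemma sum_pos_part_prefix:
  fixes f :: "nat \<Rightarrow> real"
  assumes "s \<le> K" "\<forall>l<s. f l \<ge> 0" "\<forall>l. s \<le> l \<and> l < K \<longrightarrow> f l \<le> 0"
  shows "(\<Sum>l<K. max 0 (f l)) = (\<Sum>l<s. f l)"
proof -
  have "(\<Sum>l<K. max 0 (f l)) = (\<Sum>l<K. f l * (if l < s then 1 else 0))"
    by (rule sum.cong) (use assms in auto)
  then show ?thesis using sum_prefix_ind[OF assms(1)] by simp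
qed



lemma phi_exists:
  fixes S :: "(real \<times> real) set"
  assumes fin: "finite S" and s0: "(0,0) \<in> S" and s1: "(1,1) \<in> S"
  shows "\<exists>\<phi>. \<forall>x\<in>{0..1}. (x, \<phi> x) \<in> convex hull S \<and> (\<forall>y. (x,y) \<in> convex hull S \<longrightarrow> \<phi> x \<le> y)"
proof -
  have "\<forall>x\<in>{0..1}. \<exists>y. (x,y) \<in> convex hull S \<and> (\<forall>y'. (x,y') \<in> convex hull S \<longrightarrow> y \<le> y')"
  proof
    fix x :: real assume x: "x \<in> {0..1}"
    let ?T = "convex hull S \<inter> {p. fst p = x}"
    have cl: "closed {p::real\<times>real. fst p = x}"
      by (intro closed_Collect_eq continuous_on_fst continuous_on_id continuous_on_const)
    have cT: "compact ?T" by (intro compact_Int_closed finite_imp_compact_convex_hull fin cl)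
    have "x *\<^sub>R (1::real,1::real) + (1 - x) *\<^sub>R (0::real,0::real) \<in> convex hull S"
      by (rule convexD[OF convex_convex_hull]) (use x s0 s1 in \<open>auto intro: hull_inc\<close>)
    then have "(x, x) \<in> convex hull S" by simp
    then have ne: "?T \<noteq> {}" by auto
    have "continuous_on ?T snd" by (intro continuous_on_snd continuous_on_id)
    then obtain p where p: "p \<in> ?T" "\<forall>q\<in>?T. snd p \<le> snd q"
      using continuous_attains_inf[OF cT ne] by blast
    have "(x, snd p) \<in> convex hull S" using p(1) by (cases p) auto
    moreover have "\<forall>y'. (x,y') \<in> convex hull S \<longrightarrow> snd p \<le> y'" using p(2) by force
    ultimately show "\<exists>y. (x,y) \<in> convex hull S \<and> (\<forall>y'. (x,y') \<in> convex hull S \<longrightarrow> y \<le> y')" by blast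
  qed
  then show ?thesis by (rule bchoice)
qed

lemma exists_G:
  fixes S :: "(real \<times> real) set"
  assumes fin: "finite S" and s0: "(0,0) \<in> S" and s1: "(1,1) \<in> S"
    and rng: "\<forall>p\<in>S. 0 \<le> fst p \<and> fst p \<le> 1 \<and> 0 \<le> snd p \<and> snd p \<le> 1"
    and sym: "\<forall>p\<in>S. (1 - fst p, 1 - snd p) \<in> S"
  shows "\<exists>K Gm. 1 \<le> K \<and> is_channel2 (K, Gm) \<and> (\<forall>p\<in>S. inZ K Gm (pt (fst p) (snd p))) \<and>
     (\<forall>m C. (\<forall>r. (\<Sum>j<m. C r j) = 1) \<longrightarrow> (\<forall>p\<in>S. inZ m C (pt (fst p) (snd p))) \<longrightarrow>
        (\<forall>v. (\<forall>l<K. 0 \<le> v l \<and> v l \<le> 1) \<longrightarrow> inZ m C (\<lambda>r. \<Sum>l<K. Gm r l * v l)))"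
proof -
  define CS where "CS = convex hull S"
  have cvx: "convex CS" unfolding CS_def by simp
  have SCS: "S \<subseteq> CS" unfolding CS_def by (rule hull_subset)
  have CSy: "\<forall>p\<in>CS. 0 \<le> snd p"
  proof -
    have "convex {p::real\<times>real. 0 \<le> snd p}"
      by (rule convexI) simp
    then have "CS \<subseteq> {p. 0 \<le> snd p}" unfolding CS_def using rng by (intro hull_minimal) auto
    then show ?thesis by auto
  qed
  obtain \<phi> where phi: "\<forall>x\<in>{0..1}. (x, \<phi> x) \<in> CS \<and> (\<forall>y. (x,y) \<in> CS \<longrightarrow> \<phi> x \<le> y)"
    using phi_exists[OF fin s0 s1] unfolding CS_def by blast
  have phimem: "(x, \<phi> x) \<in> CS" if "0 \<le> x" "x \<le> 1" for x using phi that by auto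
  have phimin: "\<phi> x \<le> y" if "0 \<le> x" "x \<le> 1" "(x, y) \<in> CS" for x y using phi that by auto
  have phinn: "0 \<le> \<phi> x" if "0 \<le> x" "x \<le> 1" for x using CSy phimem[OF that] by force
  have phi0: "\<phi> 0 = 0" using phimin[of 0 0] phinn[of 0] s0 SCS by force
  have phiS: "\<phi> (fst p) \<le> snd p" if "p \<in> S" for p
    using phimin[of "fst p" "snd p"] rng that SCS by auto
  have phi1: "\<phi> 1 \<le> 1" using phiS[OF s1] by simp
  have phiconv: "\<phi> b * (c - a) \<le> \<phi> a * (c - b) + \<phi> c * (b - a)"
    if ab: "0 \<le> a" "a \<le> b" "b \<le> c" "c \<le> 1" "a < c" for a b c
  proof -
    define t where "t = (c - b) / (c - a)"
    have t01: "0 \<le> t" "t \<le> 1" unfolding t_def using ab by auto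
    have tca: "t * (c - a) = c - b" unfolding t_def using ab by simp
    have tca2: "(1 - t) * (c - a) = b - a" using tca by (simp add: algebra_simps)
    have "t *\<^sub>R (a, \<phi> a) + (1 - t) *\<^sub>R (c, \<phi> c) \<in> CS"
      by (rule convexD[OF cvx]) (use t01 phimem ab in auto)
    moreover have "t * a + (1 - t) * c = b" using tca by (simp add: algebra_simps)
    ultimately have "(b, t * \<phi> a + (1 - t) * \<phi> c) \<in> CS" by simp
    then have "\<phi> b \<le> t * \<phi> a + (1 - t) * \<phi> c" using phimin ab by auto
    then have "\<phi> b * (c - a) \<le> (t * \<phi> a + (1 - t) * \<phi> c) * (c - a)" using ab by (simp add: mult_right_mono)
    also have "\<dots> = \<phi> a * (t * (c - a)) + \<phi> c * ((1 - t) * (c - a))" by (simp add: algebra_simps)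
    also have "\<dots> = \<phi> a * (c - b) + \<phi> c * (b - a)" unfolding tca tca2 ..
    finally show ?thesis .
  qed
  have phimono: "\<phi> a \<le> \<phi> b" if ab: "0 \<le> a" "a \<le> b" "b \<le> 1" for a b
  proof (cases "a = b")
    case False
    then have "a < b" using ab by simp
    then have "\<phi> a * (b - 0) \<le> \<phi> 0 * (b - a) + \<phi> b * (a - 0)" using phiconv[of 0 a b] ab by simp
    then have "\<phi> a * b \<le> \<phi> b * a" using phi0 by simp
    also have "\<dots> \<le> \<phi> b * b" using phinn[of b] ab by (simp add: mult_left_mono)
    finally show ?thesis using \<open>a < b\<close> ab by simp
  qed simp
  define X where "X = fst ` S"
  have finX: "finite X" unfolding X_def using fin by simp
  have X01: "0 \<in> X" "1 \<in> X" unfolding X_def using s0 s1 by force+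
  have Xrng: "x \<in> X \<Longrightarrow> 0 \<le> x \<and> x \<le> 1" for x unfolding X_def using rng by auto
  define xs where "xs = sorted_list_of_set X"
  define K where "K = length xs"
  have setxs: "set xs = X" unfolding xs_def using finX by simp
  have strict: "sorted_wrt (<) xs" unfolding xs_def by (rule strict_sorted_list_of_set)
  have Kc: "K = card X" unfolding K_def xs_def by simp
  have "card {0::real, 1} \<le> card X" using X01 finX by (intro card_mono) auto
  then have K2: "2 \<le> K" unfolding Kc by simp
  have xsin: "0 \<le> xs ! l \<and> xs ! l \<le> 1" if "l < K" for l
    using Xrng nth_mem[of l xs] that setxs unfolding K_def by auto
  have xslt: "xs ! i < xs ! j" if "i < j" "j < K" for i j
    using sorted_wrt_nth_less[OF strict that[unfolded K_def]] .
  have xs0: "xs ! 0 = 0"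
  proof -
    obtain i where i: "i < K" "xs ! i = 0" using X01(1) setxs unfolding K_def by (metis in_set_conv_nth)
    show ?thesis
    proof (cases "i = 0")
      case False then have "xs ! 0 < xs ! i" using xslt[of 0 i] i by simp
      then show ?thesis using xsin[of 0] i K2 by simp
    qed (use i in simp)
  qed
  obtain K1 where K1: "K = Suc K1" using K2 by (cases K) auto
  have K1pos: "1 \<le> K1" using K1 K2 by simp
  have xslast: "xs ! K1 = 1"
  proof -
    obtain i where i: "i < K" "xs ! i = 1" using X01(2) setxs unfolding K_def by (metis in_set_conv_nth)
    show ?thesis
    proof (cases "i = K1")
      case False then have "i < K1" using i K1 by simp
      then have "xs ! i < xs ! K1" using xslt[of i K1] K1 by simp
      then show ?thesis using xsin[of K1] i K1 by simp
    qed (use i in simp)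
  qed
  define Gm where "Gm = (\<lambda>r l. if Suc l < K then (if r then \<phi> (xs ! Suc l) - \<phi> (xs ! l) else xs ! Suc l - xs ! l)
      else (if r then 1 - \<phi> 1 else (0::real)))"
  have preF: "(\<Sum>l<s. Gm False l) = xs ! s" if "s \<le> K1" for s
  proof -
    have "(\<Sum>l<s. Gm False l) = (\<Sum>l<s. xs ! Suc l - xs ! l)"
      by (rule sum.cong) (use that K1 in \<open>auto simp: Gm_def\<close>)
    also have "\<dots> = xs ! s - xs ! 0" by (rule sum_lessThan_telescope)
    finally show ?thesis using xs0 by simp
  qed
  have preT: "(\<Sum>l<s. Gm True l) = \<phi> (xs ! s)" if "s \<le> K1" for s
  proof -
    have "(\<Sum>l<s. Gm True l) = (\<Sum>l<s. \<phi> (xs ! Suc l) - \<phi> (xs ! l))"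
      by (rule sum.cong) (use that K1 in \<open>auto simp: Gm_def\<close>)
    also have "\<dots> = \<phi> (xs ! s) - \<phi> (xs ! 0)" by (rule sum_lessThan_telescope)
    finally show ?thesis using xs0 phi0 by simp
  qed
  have GmK1: "Gm r K1 = (if r then 1 - \<phi> 1 else 0)" for r unfolding Gm_def using K1 by simp
  have total: "(\<Sum>l<K. Gm r l) = 1" for r
  proof -
    have "(\<Sum>l<K. Gm r l) = (\<Sum>l<K1. Gm r l) + Gm r K1" unfolding K1 by simp
    then show ?thesis using preF[of K1] preT[of K1] xslast GmK1 by (cases r) auto
  qed
  have Gnn: "0 \<le> Gm r l" if "l < K" for r l
  proof (cases "Suc l < K")
    case True
    have "xs ! l < xs ! Suc l" using xslt[of l "Suc l"] True by simp
    moreover have "\<phi> (xs ! l) \<le> \<phi> (xs ! Suc l)"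
      using phimono xsin[of l] xsin[of "Suc l"] True \<open>xs ! l < xs ! Suc l\<close> by simp
    ultimately show ?thesis unfolding Gm_def using True by simp
  next
    case False then show ?thesis unfolding Gm_def using phi1 by simp
  qed
  have chan: "is_channel2 (K, Gm)" unfolding is_channel2_def using Gnn total by simp
  have preZ: "inZ K Gm (\<lambda>r. \<Sum>l<s. Gm r l)" if "s \<le> K" for s
  proof -
    have "(\<lambda>r. \<Sum>l<K. Gm r l * (if l < s then 1 else 0)) = (\<lambda>r. \<Sum>l<s. Gm r l)"
      using sum_prefix_ind[OF that] by simp
    moreover have "inZ K Gm (\<lambda>r. \<Sum>l<K. Gm r l * (if l < s then 1 else 0))"
      unfolding inZ_def by (intro exI[of _ "\<lambda>l. if l < s then 1 else 0"]) simp
    ultimately show ?thesis by simp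
  qed
  have ptS: "inZ K Gm (pt (fst p) (snd p))" if p: "p \<in> S" for p
  proof -
    define x where "x = fst p"
    define y where "y = snd p"
    have "x \<in> X" unfolding x_def X_def using p by simp
    then obtain s where s: "s < K" "xs ! s = x" using setxs unfolding K_def by (metis in_set_conv_nth)
    have p': "(1 - x, 1 - y) \<in> S" using sym p unfolding x_def y_def by simp
    then have "1 - x \<in> X" unfolding X_def by force
    then obtain s' where s': "s' < K" "xs ! s' = 1 - x" using setxs unfolding K_def by (metis in_set_conv_nth)
    have lo: "inZ K Gm (pt x (\<phi> x))"
    proof -
      have "(\<lambda>r. \<Sum>l<s. Gm r l) = pt x (\<phi> x)"
        using preF[of s] preT[of s] s K1 unfolding pt_def by (auto intro!: ext)
      then show ?thesis using preZ[of s] s by simp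
    qed
    have hi: "inZ K Gm (pt x (1 - \<phi> (1 - x)))"
    proof -
      have "(\<lambda>r. (\<Sum>l<K. Gm r l) - (\<Sum>l<s'. Gm r l)) = pt x (1 - \<phi> (1 - x))"
        using preF[of s'] preT[of s'] s' K1 total unfolding pt_def by (auto intro!: ext)
      then show ?thesis using inZ_compl[OF preZ[of s']] s' by simp
    qed
    have ylo: "\<phi> x \<le> y" using phiS[OF p] unfolding x_def y_def .
    have yhi: "y \<le> 1 - \<phi> (1 - x)" using phiS[OF p'] by simp
    show ?thesis
    proof (cases "\<phi> x = 1 - \<phi> (1 - x)")
      case True
      then have "y = \<phi> x" using ylo yhi by simp
      then show ?thesis using lo unfolding x_def y_def by simp
    next
      case False
      define t where "t = (1 - \<phi> (1 - x) - y) / (1 - \<phi> (1 - x) - \<phi> x)"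
      have den: "1 - \<phi> (1 - x) - \<phi> x > 0" using False ylo yhi by simp
      have t01: "0 \<le> t" "t \<le> 1" unfolding t_def using den ylo yhi by auto
      have ty: "t * \<phi> x + (1 - t) * (1 - \<phi> (1 - x)) = y"
      proof -
        have "t * (1 - \<phi> (1 - x) - \<phi> x) = 1 - \<phi> (1 - x) - y" unfolding t_def using den by simp
        then show ?thesis by (simp add: algebra_simps)
      qed
      have "inZ K Gm (\<lambda>r. t * pt x (\<phi> x) r + (1 - t) * pt x (1 - \<phi> (1 - x)) r)"
        by (rule inZ_conv[OF lo hi t01])
      moreover have "(\<lambda>r. t * pt x (\<phi> x) r + (1 - t) * pt x (1 - \<phi> (1 - x)) r) = pt x y"
        using ty unfolding pt_def by (auto intro!: ext simp: algebra_simps)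
      ultimately show ?thesis unfolding x_def y_def by simp
    qed
  qed
  define dx where "dx = (\<lambda>l. xs ! Suc l - xs ! l)"
  define sg where "sg = (\<lambda>l. (\<phi> (xs ! Suc l) - \<phi> (xs ! l)) / dx l)"
  have dxpos: "dx l > 0" if "l < K1" for l unfolding dx_def using xslt[of l "Suc l"] that K1 by simp
  have GmF: "Gm False l = dx l" if "l < K1" for l unfolding Gm_def dx_def using that K1 by simp
  have GmT: "Gm True l = dx l * sg l" if "l < K1" for l
    unfolding Gm_def sg_def using that K1 dxpos[OF that] by simp
  have sgstep: "sg l \<le> sg (Suc l)" if "Suc l < K1" for l
  proof -
    let ?a = "xs ! l" and ?b = "xs ! Suc l" and ?c = "xs ! Suc (Suc l)"
    have ab: "?a < ?b" "?b < ?c" using xslt[of l "Suc l"] xslt[of "Suc l" "Suc (Suc l)"] that K1 by auto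
    have rng': "0 \<le> ?a" "?c \<le> 1" using xsin[of l] xsin[of "Suc (Suc l)"] that K1 by auto
    have "\<phi> ?b * (?c - ?a) \<le> \<phi> ?a * (?c - ?b) + \<phi> ?c * (?b - ?a)"
      using phiconv[of ?a ?b ?c] ab rng' by simp
    then have "(\<phi> ?b - \<phi> ?a) * (?c - ?b) \<le> (\<phi> ?c - \<phi> ?b) * (?b - ?a)"
      by (simp add: algebra_simps)
    then have "(\<phi> ?b - \<phi> ?a) / (?b - ?a) \<le> (\<phi> ?c - \<phi> ?b) / (?c - ?b)"
      using ab by (simp add: divide_simps)
    then show ?thesis unfolding sg_def dx_def by simp
  qed
  have sgmono: "sg l \<le> sg l'" if "l \<le> l'" "l' < K1" for l l'
    using that
  proof (induction l' rule: dec_induct)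
    case base then show ?case by simp
  next
    case (step n) then show ?case using sgstep[of n] by simp
  qed
  have main: "inZ m C (\<lambda>r. \<Sum>l<K. Gm r l * v l)"
    if tot1: "\<forall>r. (\<Sum>j<m. C r j) = 1" and SZ: "\<forall>p\<in>S. inZ m C (pt (fst p) (snd p))"
      and v: "\<forall>l<K. 0 \<le> v l \<and> v l \<le> 1" for m C v
  proof -
    have "CS \<subseteq> Zp m C" unfolding CS_def using SZ
      by (intro hull_minimal convex_Zp) (auto simp: Zp_def)
    then have CSZ: "inZ m C (pt x y)" if "(x, y) \<in> CS" for x y using that by (auto simp: Zp_def)
    have pres: "inZ m C (\<lambda>r. \<Sum>l<s. Gm r l)" if "s \<le> K" for s
    proof (cases "s \<le> K1")
      case True
      have "(\<lambda>r. \<Sum>l<s. Gm r l) = pt (xs ! s) (\<phi> (xs ! s))"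
        using preF[OF True] preT[OF True] unfolding pt_def by (auto intro!: ext)
      moreover have "(xs ! s, \<phi> (xs ! s)) \<in> CS" using phimem xsin[of s] True K1 by simp
      ultimately show ?thesis using CSZ by simp
    next
      case False
      then have "s = K" using that K1 by simp
      then have "(\<lambda>r. \<Sum>l<s. Gm r l) = (\<lambda>r. \<Sum>j<m. C r j)" using total tot1 by simp
      then show ?thesis using inZ_total by simp
    qed
    have sufs: "inZ m C (\<lambda>r. 1 - (\<Sum>l<s. Gm r l))" if "s \<le> K" for s
      using inZ_compl[OF pres[OF that]] tot1 by simp
    show ?thesis
    proof (rule supf_inZ)
      fix a b
      define f where "f = (\<lambda>l. a * Gm False l + b * Gm True l)"
      have fl: "f l = dx l * (a + b * sg l)" if "l < K1" for l
        unfolding f_def using GmF[OF that] GmT[OF that] by (simp add: algebra_simps)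
      have fK1: "f K1 = b * (1 - \<phi> 1)" unfolding f_def using GmK1 by simp
      have "a * (\<Sum>l<K. Gm False l * v l) + b * (\<Sum>l<K. Gm True l * v l) = (\<Sum>l<K. v l * f l)"
        unfolding f_def by (simp add: sum_distrib_left sum.distrib algebra_simps)
      also have "\<dots> \<le> (\<Sum>l<K. max 0 (f l))"
      proof (rule sum_mono)
        fix l assume "l \<in> {..<K}"
        then have "0 \<le> v l" "v l \<le> 1" using v by auto
        then show "v l * f l \<le> max 0 (f l)"
          by (smt (verit) mult_left_le_one_le mult_nonneg_nonpos mult_nonneg_nonneg)
      qed
      also have "\<dots> \<le> supf m C a b"
      proof (cases "b \<ge> 0")
        case True
        have up: "\<forall>l l'. l < l' \<longrightarrow> l' < K \<longrightarrow> f l > 0 \<longrightarrow> f l' \<ge> 0"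
        proof (intro allI impI)
          fix l l' assume ll: "l < l'" "l' < K" "f l > 0"
          show "f l' \<ge> 0"
          proof (cases "l' = K1")
            case True then show ?thesis using fK1 \<open>b \<ge> 0\<close> phi1 by simp
          next
            case False
            then have l'K: "l' < K1" using ll K1 by simp
            then have lK: "l < K1" using ll by simp
            have "a + b * sg l > 0" using ll(3) fl[OF lK] dxpos[OF lK] by (simp add: zero_less_mult_iff)
            moreover have "b * sg l \<le> b * sg l'" using sgmono[of l l'] ll l'K \<open>b \<ge> 0\<close> by (simp add: mult_left_mono)
            ultimately have "a + b * sg l' \<ge> 0" by simp
            then show ?thesis using fl[OF l'K] dxpos[OF l'K] by simp
          qed
        qed
        obtain s where s: "s \<le> K" "\<forall>l<s. f l \<le> 0" "\<forall>l. s \<le> l \<and> l < K \<longrightarrow> f l \<ge> 0"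
          using sign_split[OF up] by blast
        have "(\<Sum>l<K. max 0 (f l)) = (\<Sum>l<K. f l) - (\<Sum>l<s. f l)"
          by (rule sum_pos_part_suffix[OF s])
        also have "\<dots> = a * (1 - (\<Sum>l<s. Gm False l)) + b * (1 - (\<Sum>l<s. Gm True l))"
          unfolding f_def using total by (simp add: sum.distrib sum_distrib_left[symmetric] algebra_simps)
        also have "\<dots> \<le> supf m C a b" using inZ_supf[OF sufs[OF s(1)]] by simp
        finally show ?thesis .
      next
        case False
        define g where "g = (\<lambda>l. - f l)"
        have up: "\<forall>l l'. l < l' \<longrightarrow> l' < K \<longrightarrow> g l > 0 \<longrightarrow> g l' \<ge> 0"
        proof (intro allI impI)
          fix l l' assume ll: "l < l'" "l' < K" "g l > 0"
          show "g l' \<ge> 0"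
          proof (cases "l' = K1")
            case True then show ?thesis using fK1 \<open>\<not> b \<ge> 0\<close> phi1 unfolding g_def
              by (simp add: mult_nonpos_nonneg)
          next
            case False
            then have l'K: "l' < K1" using ll K1 by simp
            then have lK: "l < K1" using ll by simp
            have "a + b * sg l < 0" using ll(3) fl[OF lK] dxpos[OF lK] unfolding g_def
              by (simp add: mult_less_0_iff)
            moreover have "b * sg l' \<le> b * sg l" using sgmono[of l l'] ll l'K \<open>\<not> b \<ge> 0\<close>
              by (simp add: mult_left_mono_neg)
            ultimately have "a + b * sg l' \<le> 0" by simp
            then show ?thesis using fl[OF l'K] dxpos[OF l'K] unfolding g_def
              by (simp add: mult_nonneg_nonpos)
          qed
        qed
        obtain s where s: "s \<le> K" "\<forall>l<s. g l \<le> 0" "\<forall>l. s \<le> l \<and> l < K \<longrightarrow> g l \<ge> 0"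
          using sign_split[OF up] by blast
        have s': "\<forall>l<s. f l \<ge> 0" "\<forall>l. s \<le> l \<and> l < K \<longrightarrow> f l \<le> 0" using s(2,3) unfolding g_def by auto
        have "(\<Sum>l<K. max 0 (f l)) = (\<Sum>l<s. f l)"
          by (rule sum_pos_part_prefix[OF s(1) s'])
        also have "\<dots> = a * (\<Sum>l<s. Gm False l) + b * (\<Sum>l<s. Gm True l)"
          unfolding f_def by (simp add: sum.distrib sum_distrib_left)
        also have "\<dots> \<le> supf m C a b" using inZ_supf[OF pres[OF s(1)]] by simp
        finally show ?thesis .
      qed
      finally show "a * (\<Sum>l<K. Gm False l * v l) + b * (\<Sum>l<K. Gm True l * v l) \<le> supf m C a b" .
    qed
  qed
  show ?thesis
    using K2 chan ptS main by (intro exI[of _ K] exI[of _ Gm]) auto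
qed





theorem mainTheorem12:
  fixes n :: nat and M :: "nat \<Rightarrow> channel2"
  assumes "n \<ge> 1"
    and "\<forall>i < n. is_channel2 (M i) \<and> fst (M i) = 2"
  shows "\<exists>G. is_channel2 G \<and> (\<forall>i < n. refines G (M i)) \<and>
            (\<forall>H. is_channel2 H \<and> (\<forall>i < n. refines H (M i)) \<longrightarrow> refines H G)"
proof -
  have hM: "\<forall>i < n. is_channel2 (M i) \<and> fst (M i) = 2" using assms(2) .
  have Mrow: "snd (M i) r 0 + snd (M i) r 1 = 1" if "i < n" for i r
  proof -
    have "(\<Sum>j<fst (M i). snd (M i) r j) = 1" using hM that unfolding is_channel2_def by blast
    then show ?thesis using hM that by (simp add: numeral_2_eq_2)
  qed
  have Mnn: "0 \<le> snd (M i) r j" if "i < n" "j < 2" for i r j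
    using hM that unfolding is_channel2_def by auto
  define P where "P = (\<lambda>i. (snd (M i) False 0, snd (M i) True 0))"
  define refl where "refl = (\<lambda>p::real\<times>real. (1 - fst p, 1 - snd p))"
  define S where "S = {(0,0),(1,1)} \<union> P ` {..<n} \<union> refl ` P ` {..<n}"
  have fin: "finite S" unfolding S_def by simp
  have s0: "(0,0) \<in> S" and s1: "(1,1) \<in> S" unfolding S_def by auto
  have Prng: "0 \<le> fst (P i) \<and> fst (P i) \<le> 1 \<and> 0 \<le> snd (P i) \<and> snd (P i) \<le> 1" if "i < n" for i
  proof -
    have "0 \<le> snd (M i) False 1" "0 \<le> snd (M i) True 1" "0 \<le> snd (M i) False 0" "0 \<le> snd (M i) True 0"
      using Mnn[where i=i and r=False and j=1] Mnn[where i=i and r=True and j=1]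
        Mnn[where i=i and r=False and j=0] Mnn[where i=i and r=True and j=0] that by auto
    then show ?thesis using Mrow[OF that, of False] Mrow[OF that, of True] unfolding P_def by simp
  qed
  have rng: "\<forall>p\<in>S. 0 \<le> fst p \<and> fst p \<le> 1 \<and> 0 \<le> snd p \<and> snd p \<le> 1"
    unfolding S_def refl_def using Prng by auto
  have sym: "\<forall>p\<in>S. (1 - fst p, 1 - snd p) \<in> S"
  proof
    fix p assume "p \<in> S"
    then consider "p = (0,0)" | "p = (1,1)" | i where "i < n" "p = P i" | i where "i < n" "p = refl (P i)"
      unfolding S_def by auto
    then show "(1 - fst p, 1 - snd p) \<in> S"
    proof cases
      case 1 then show ?thesis using s1 by simp
    next
      case 2 then show ?thesis using s0 by simp
    next
      case 3 then show ?thesis unfolding S_def refl_def by auto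
    next
      case 4
      then have "(1 - fst p, 1 - snd p) = P i" unfolding refl_def by (cases "P i") auto
      then show ?thesis unfolding S_def using 4 by auto
    qed
  qed
  obtain K Gm where KG: "1 \<le> K" "is_channel2 (K, Gm)" "\<forall>p\<in>S. inZ K Gm (pt (fst p) (snd p))"
    "\<forall>m C. (\<forall>r. (\<Sum>j<m. C r j) = 1) \<longrightarrow> (\<forall>p\<in>S. inZ m C (pt (fst p) (snd p))) \<longrightarrow>
        (\<forall>v. (\<forall>l<K. 0 \<le> v l \<and> v l \<le> 1) \<longrightarrow> inZ m C (\<lambda>r. \<Sum>l<K. Gm r l * v l))"
    using exists_G[OF fin s0 s1 rng sym] by blast
  have Gtot: "(\<Sum>l<K. Gm r l) = 1" for r using KG(2) unfolding is_channel2_def by simp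
  have ptP: "pt (fst (P i)) (snd (P i)) = (\<lambda>r. snd (M i) r 0)" for i
    unfolding pt_def P_def by (auto intro!: ext)
  have GM: "refines (K, Gm) (M i)" if i: "i < n" for i
  proof -
    have "P i \<in> S" unfolding S_def using i by auto
    then have "inZ K Gm (\<lambda>r. snd (M i) r 0)" using KG(3) ptP by metis
    then obtain v where v: "\<forall>l<K. 0 \<le> v l \<and> v l \<le> 1" "\<forall>r. (\<Sum>l<K. Gm r l * v l) = snd (M i) r 0"
      unfolding inZ_def by blast
    define W where "W = (\<lambda>l c. if c = (0::nat) then v l else 1 - v l)"
    have "row_stochastic K 2 W"
      unfolding row_stochastic_def W_def using v(1) by (simp add: numeral_2_eq_2)
    moreover have "\<forall>r. \<forall>k<2. (\<Sum>l<K. Gm r l * W l k) = snd (M i) r k"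
    proof (intro allI impI)
      fix r and k :: nat assume k: "k < 2"
      show "(\<Sum>l<K. Gm r l * W l k) = snd (M i) r k"
      proof (cases "k = 0")
        case True then show ?thesis using v(2) by (simp add: W_def)
      next
        case False
        then have k1: "k = 1" using k by simp
        have "(\<Sum>l<K. Gm r l * W l k) = (\<Sum>l<K. Gm r l - Gm r l * v l)"
          unfolding k1 W_def by (rule sum.cong) (simp_all add: algebra_simps)
        also have "\<dots> = 1 - snd (M i) r 0" using Gtot v(2) by (simp add: sum_subtractf)
        also have "\<dots> = snd (M i) r 1" using Mrow[OF i, of r] by simp
        finally show ?thesis unfolding k1 .
      qed
    qed
    moreover have "fst (M i) = 2" using hM i by simp
    ultimately show ?thesis unfolding Defs.refines_def by (intro exI[of _ W]) simp
  qed
  have HG: "refines H (K, Gm)" if H: "is_channel2 H" "\<forall>i < n. refines H (M i)" for H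
  proof -
    obtain m C where mC: "H = (m, C)" by (cases H)
    have Cnn: "\<forall>j<m. \<forall>r. 0 \<le> C r j" using H(1) unfolding mC is_channel2_def by simp
    have Ctot: "\<forall>r. (\<Sum>j<m. C r j) = 1" using H(1) unfolding mC is_channel2_def by simp
    have PZ: "inZ m C (\<lambda>r. snd (M i) r 0)" if i: "i < n" for i
    proof -
      obtain W where W: "row_stochastic m 2 W" "\<forall>r. \<forall>k<2. (\<Sum>j<m. C r j * W j k) = snd (M i) r k"
        using H(2) i hM unfolding Defs.refines_def mC by auto
      have "\<forall>j<m. 0 \<le> W j 0 \<and> W j 0 \<le> 1"
      proof (intro allI impI)
        fix j assume j: "j < m"
        have "0 \<le> W j 0" "0 \<le> W j 1" "W j 0 + W j 1 = 1"
          using W(1) j unfolding row_stochastic_def by (auto simp: numeral_2_eq_2)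
        then show "0 \<le> W j 0 \<and> W j 0 \<le> 1" by simp
      qed
      moreover have "\<forall>r. (\<Sum>j<m. C r j * W j 0) = snd (M i) r 0" using W(2) by simp
      ultimately show ?thesis unfolding inZ_def by (intro exI[of _ "\<lambda>j. W j 0"]) simp
    qed
    have SZ: "\<forall>p\<in>S. inZ m C (pt (fst p) (snd p))"
    proof
      fix p assume "p \<in> S"
      then consider "p = (0,0)" | "p = (1,1)" | i where "i < n" "p = P i" | i where "i < n" "p = refl (P i)"
        unfolding S_def by auto
      then show "inZ m C (pt (fst p) (snd p))"
      proof cases
        case 1
        have "pt (fst p) (snd p) = (\<lambda>r. 0)" unfolding 1 pt_def by auto
        then show ?thesis using inZ_zero by simp
      next
        case 2
        have "pt (fst p) (snd p) = (\<lambda>r. \<Sum>j<m. C r j)" unfolding 2 pt_def using Ctot by auto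
        then show ?thesis using inZ_total by simp
      next
        case 3 then show ?thesis using PZ ptP by simp
      next
        case 4
        have "pt (fst p) (snd p) = (\<lambda>r. (\<Sum>j<m. C r j) - snd (M i) r 0)"
          unfolding 4 pt_def refl_def P_def using Ctot by (auto intro!: ext)
        then show ?thesis using inZ_compl[OF PZ[OF 4(1)]] by simp
      qed
    qed
    have hz: "\<forall>v. (\<forall>l<K. 0 \<le> v l \<and> v l \<le> 1) \<longrightarrow> inZ m C (\<lambda>r. \<Sum>l<K. Gm r l * v l)"
      by (rule mp[OF mp[OF KG(4)[THEN spec[where x=m], THEN spec[where x=C]] Ctot] SZ])
    have tot: "\<forall>r. (\<Sum>j<m. C r j) = (\<Sum>l<K. Gm r l)" using Ctot Gtot by simp
    obtain W where W: "\<forall>j<m. (\<forall>l<K. 0 \<le> W j l) \<and> (\<Sum>l<K. W j l) = 1"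
      "\<forall>r. \<forall>l<K. (\<Sum>j<m. C r j * W j l) = Gm r l"
      using blackwell[OF KG(1) Cnn tot hz] by blast
    show ?thesis unfolding mC Defs.refines_def row_stochastic_def using W by (intro exI[of _ W]) simp
  qed
  show ?thesis by (intro exI[of _ "(K, Gm)"] conjI KG(2) allI impI GM HG) auto
qed


end
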